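(* If $s$ is a normalized fully ternary string of length $n$ which is bad (in the sense defined in the context), then $d_{\rm g}(s)=n-2$.
   Context: Strings are finite words over $\{0,1,2,\dots\}$. A string is \emph{normalized} if no two adjacent symbols are equal; the \emph{normalization} of a string replaces every maximal run of identical symbols by a single copy. A string is \emph{fully $k$-ary} if the set of symbols occurring in it is exactly $\{0,\dots,k-1\}$; fully ternary means fully $3$-ary. For a normalized string $s=s_1\cdots s_n$ and $1\le i\le n$, the flip $f^{(i)}(s)$ is the normalization of $s_i\cdots s_1 s_{i+1}\cdots s_n$. The grouping distance $d_{\rm g}(s)$ of a normalized fully $k$-ary string is the minimum number of flips needed to transform $s$ into a string of length $k$. Regular-expression notation: $w^i$ is $i$ repetitions of $w$, $w^*$ is zero or more, $w^+$ one or more, $w^{\ge 2}$ two or more repetitions; $\{a,b\}$ denotes a single symbol that is either $a$ or $b$ (chosen independently at each occurrence). A normalized fully ternary string is \emph{bad} (for grouping) if, after some relabelling (bijection) of the symbols $\{0,1,2\}$, it is of one of the following types: (I) $0(12)^{\ge 2}$ or $02(12)^+$; (II) $(\{0,1\}2)^+$ or $(2\{0,1\})^+2$; (III) $0(21)^+02(12)^*$; (IV) one of the eight strings $210212$, $021012$, $0120212$, $1201212$, $02101212$, $20210212$, $020210212$, $120120212$. All other normalized fully ternary strings are \emph{good}. *)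

theory Defs
  imports Main
begin

definition normalized :: "nat list \<Rightarrow> bool" where
  "normalized s \<longleftrightarrow> (\<forall>i. Suc i < length s \<longrightarrow> s ! i \<noteq> s ! Suc i)"

definition normalize :: "nat list \<Rightarrow> nat list" where
  "normalize s = remdups_adj s"

definition fully_kary :: "nat \<Rightarrow> nat list \<Rightarrow> bool" where
  "fully_kary k s \<longleftrightarrow> set s = {0..<k}"

definition flip :: "nat \<Rightarrow> nat list \<Rightarrow> nat list" where
  "flip i s = normalize (rev (take i s) @ drop i s)"

definition flip_step :: "nat list \<Rightarrow> nat list \<Rightarrow> bool" where
  "flip_step s t \<longleftrightarrow> (\<exists>i. 1 \<le> i \<and> i \<le> length s \<and> t = flip i s)"

definition grouping_dist :: "nat list \<Rightarrow> nat" where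
  "grouping_dist s = (LEAST m. \<exists>t. (flip_step ^^ m) s t \<and> length t = card (set s))"

definition typeI :: "nat list \<Rightarrow> bool" where
  "typeI s \<longleftrightarrow>
     (\<exists>m\<ge>2. s = 0 # concat (replicate m [1,2])) \<or>
     (\<exists>m\<ge>1. s = [0,2] @ concat (replicate m [1,2]))"

definition typeII :: "nat list \<Rightarrow> bool" where
  "typeII s \<longleftrightarrow>
     (\<exists>xs. xs \<noteq> [] \<and> set xs \<subseteq> {0,1} \<and> s = concat (map (\<lambda>a. [a,2]) xs)) \<or>
     (\<exists>xs. xs \<noteq> [] \<and> set xs \<subseteq> {0,1} \<and> s = concat (map (\<lambda>a. [2,a]) xs) @ [2])"

definition typeIII :: "nat list \<Rightarrow> bool" where
  "typeIII s \<longleftrightarrow>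
     (\<exists>m p. m \<ge> 1 \<and> s = [0] @ concat (replicate m [2,1]) @ [0,2] @ concat (replicate p [1,2]))"

definition typeIV :: "nat list \<Rightarrow> bool" where
  "typeIV s \<longleftrightarrow> s \<in> {[2,1,0,2,1,2], [0,2,1,0,1,2], [0,1,2,0,2,1,2], [1,2,0,1,2,1,2],
                       [0,2,1,0,1,2,1,2], [2,0,2,1,0,2,1,2], [0,2,0,2,1,0,2,1,2],
                       [1,2,0,1,2,0,2,1,2]}"

definition bad :: "nat list \<Rightarrow> bool" where
  "bad s \<longleftrightarrow> normalized s \<and> fully_kary 3 s \<and>
     (\<exists>\<sigma>. bij_betw \<sigma> {0,1,2} {0,1,2} \<and>
        (typeI (map \<sigma> s) \<or> typeII (map \<sigma> s) \<or> typeIII (map \<sigma> s) \<or> typeIV (map \<sigma> s)))"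

end

theory Submission
  imports Defs
begin


lemma normalized_iff: "normalized s \<longleftrightarrow> distinct_adj s"
  by (simp add: normalized_def distinct_adj_conv_nth)

lemma rda_append:
  assumes "distinct_adj xs" "distinct_adj ys"
  shows "remdups_adj (xs @ ys) = (if xs \<noteq> [] \<and> ys \<noteq> [] \<and> last xs = hd ys then xs @ tl ys else xs @ ys)"
proof (cases "xs = [] \<or> ys = []")
  case True then show ?thesis using assms by (auto simp: distinct_adj_altdef)
next
  case False
  then obtain xs' x y ys' where xs: "xs = xs' @ [x]" and ys: "ys = y # ys'"
    by (metis list.exhaust rev_exhaust)
  have 1: "remdups_adj (xs @ ys) = remdups_adj (xs' @ [x]) @ tl (remdups_adj (x # y # ys'))"
    using xs ys remdups_adj_append[of xs' x "y # ys'"] by simp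
  have 2: "remdups_adj (xs' @ [x]) = xs' @ [x]" using assms(1) xs by (simp add: distinct_adj_altdef)
  have 3: "remdups_adj (y # ys') = y # ys'" using assms(2) ys by (simp add: distinct_adj_altdef)
  show ?thesis using xs ys 1 2 3 by auto
qed

lemma rda_map_inj:
  "inj_on f (set xs) \<Longrightarrow> remdups_adj (map f xs) = map f (remdups_adj xs)"
  by (induct xs rule: remdups_adj.induct) (auto simp: inj_on_def)

lemma flip_map:
  assumes "inj_on f (set x)"
  shows "map f (flip i x) = flip i (map f x)"
proof -
  have "inj_on f (set (rev (take i x) @ drop i x))"
    using assms by (rule inj_on_subset) (auto dest: in_set_takeD in_set_dropD)
  then have "map f (remdups_adj (rev (take i x) @ drop i x)) = remdups_adj (map f (rev (take i x) @ drop i x))"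
    by (rule rda_map_inj[symmetric])
  then show ?thesis unfolding flip_def normalize_def
    by (simp add: rev_map take_map drop_map)
qed

lemma flip_props:
  assumes "distinct_adj x" "1 \<le> i" "i \<le> length x"
  shows "distinct_adj (flip i x)" "set (flip i x) = set x"
        "length (flip i x) \<le> length x" "length x \<le> Suc (length (flip i x))"
proof -
  have e: "rev (take i x) @ drop i x = rev (take i x) @ drop i x" ..
  have st: "set (rev (take i x) @ drop i x) = set x"
    by (metis append_take_drop_id set_append set_rev)
  have ln: "length (rev (take i x) @ drop i x) = length x" using assms by simp
  have d1: "distinct_adj (rev (take i x))" "distinct_adj (drop i x)"
    using assms(1) by (metis append_take_drop_id distinct_adj_appendD1 distinct_adj_appendD2 distinct_adj_rev)+
  show "distinct_adj (flip i x)" by (simp add: flip_def normalize_def)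
  show "set (flip i x) = set x" using st by (simp add: flip_def normalize_def)
  show "length (flip i x) \<le> length x" using ln by (metis flip_def normalize_def remdups_adj_length)
  show "length x \<le> Suc (length (flip i x))"
    unfolding flip_def normalize_def rda_append[OF d1] using ln
    by (cases "drop i x") auto
qed

lemma flip_dec:
  assumes "distinct_adj x" "1 \<le> i" "i \<le> length x" "length (flip i x) < length x"
  shows "\<exists>a u v. x = a # u @ a # v \<and> flip i x = rev u @ a # v"
proof -
  have d1: "distinct_adj (rev (take i x))" "distinct_adj (drop i x)"
    using assms(1) by (metis append_take_drop_id distinct_adj_appendD1 distinct_adj_appendD2 distinct_adj_rev)+
  have ln: "length (rev (take i x) @ drop i x) = length x" using assms by simp
  have c: "drop i x \<noteq> [] \<and> last (rev (take i x)) = hd (drop i x)"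
    using assms(4) ln unfolding flip_def normalize_def rda_append[OF d1]
    by (auto split: if_splits)
  obtain a u where tk: "take i x = a # u" using assms(2,3)
    by (metis One_nat_def Suc_le_eq length_greater_0_conv list.exhaust take_eq_Nil2 less_le_trans zero_less_one not_less)
  obtain b v where dr: "drop i x = b # v" using c by (cases "drop i x") auto
  have "b = a" using c tk dr by simp
  have x: "x = a # u @ a # v" using tk dr \<open>b = a\<close> by (metis append_Cons append_take_drop_id)
  have "flip i x = rev u @ a # v"
    unfolding flip_def normalize_def rda_append[OF d1] using tk dr \<open>b = a\<close> by simp
  with x show ?thesis by blast
qed



definition P2 :: "nat list \<Rightarrow> bool" where
  "P2 x \<longleftrightarrow> x \<noteq> [] \<and> last x = 2 \<and> successively (\<lambda>a b. a = 2 \<or> b = 2) x"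

definition Q :: "nat list \<Rightarrow> bool" where
  "Q x \<longleftrightarrow> P2 x \<or> typeI x \<or> typeIII x \<or> typeIV x"

definition B :: "nat list \<Rightarrow> bool" where
  "B s \<longleftrightarrow> distinct_adj s \<and> set s = {0,1,2} \<and>
     (\<exists>\<sigma>. bij_betw \<sigma> {0,1,2} {0,1,2} \<and> Q (map \<sigma> s))"



lemma P2_alt: "xs \<noteq> [] \<Longrightarrow> P2 (concat (map (\<lambda>a. [a,2]) xs))"
proof (induction xs)
  case Nil then show ?case by simp
next
  case (Cons y ys)
  then show ?case by (cases "ys = []") (auto simp: P2_def successively_Cons)
qed

lemma P2_cons2: "P2 y \<Longrightarrow> P2 (2 # y)"
  by (auto simp: P2_def successively_Cons)

lemma IIb_eq: "concat (map (\<lambda>a. [2,a]) xs) @ [2::nat] = 2 # concat (map (\<lambda>a. [a,2]) xs)"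
  by (induction xs) auto

lemma typeII_P2: "typeII x \<Longrightarrow> P2 x"
  unfolding typeII_def using P2_alt P2_cons2 IIb_eq by auto

lemma P2_flip:
  assumes "P2 (a # u @ a # v)"
  shows "P2 (rev u @ a # v)"
proof -
  let ?R = "\<lambda>a b::nat. a = 2 \<or> b = 2"
  have s: "successively ?R (a # u @ a # v)" and l: "last (a # u @ a # v) = 2" using assms P2_def by auto
  have "successively ?R (rev u @ a # v)"
  proof (cases "u = []")
    case True then show ?thesis using s by (auto simp: successively_Cons)
  next
    case False
    then have "successively ?R (u @ a # v)" "?R a (hd u)" using s by (auto simp: successively_Cons)
    then have "successively ?R u" "successively ?R (a # v)" "?R (last u) a"
      using False by (auto simp: successively_append_iff)
    moreover have "successively ?R (rev u)" using \<open>successively ?R u\<close> by (simp add: disj_commute)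
    ultimately show ?thesis using \<open>?R a (hd u)\<close> False
      by (auto simp: successively_append_iff last_rev)
  qed
  moreover have "last (rev u @ a # v) = 2" using l by (cases "v = []") auto
  ultimately show ?thesis by (simp add: P2_def)
qed

lemma len_cr: "length (concat (replicate m [a,b])) = 2 * m"
  by (induction m) auto

lemma set_cr: "set (concat (replicate m [a,b])) \<subseteq> {a,b}"
  by (induction m) auto

lemma rev_cr: "rev (concat (replicate m [a,b])) = concat (replicate m [b,a])"
proof (induction m)
  case 0 then show ?case by simp
next
  case (Suc m)
  have "concat (replicate m [b,a]) @ [b,a] = [b,a] @ concat (replicate m [b,a])"
    by (metis concat.simps(2) concat_append concat.simps(1) append_Nil2 replicate_append_same)
  then show ?case using Suc by simp
qed

lemma unique_split:
  assumes "a \<notin> set w" "a \<notin> set w'" "u @ a # v = w @ a # w'"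
  shows "u = w \<and> v = w'"
  using assms
proof (induction u arbitrary: w)
  case Nil then show ?case by (cases w) auto
next
  case (Cons x u) then show ?case by (cases w) auto
qed

lemma Q_len:
  assumes "distinct_adj x" "set x = {0,1,2}" "Q x"
  shows "length x \<noteq> 3"
proof
  assume l: "length x = 3"
  from assms(3) consider "P2 x" | "typeI x" | "typeIII x" | "typeIV x" unfolding Q_def by blast
  then show False
  proof cases
    case 1
    from l obtain p q r where x: "x = [p,q,r]"
      by (auto simp: length_Suc_conv numeral_3_eq_3)
    have "q \<noteq> r" using assms(1) x by simp
    moreover have "0 \<in> set x" "1 \<in> set x" using assms(2) by auto
    ultimately show False using 1 x by (auto simp: P2_def)
  next
    case 2 then show False using l by (auto simp: typeI_def len_cr)
  next
    case 3 then show False using l by (auto simp: typeIII_def len_cr)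
  next
    case 4 then show False using l by (auto simp: typeIV_def)
  qed
qed

definition sw :: "nat \<Rightarrow> nat" where "sw n = (if n = 0 then 1 else if n = 1 then 0 else n)"

lemma bij_id3: "bij_betw id {0,1,2::nat} {0,1,2}" by simp
lemma bij_sw: "bij_betw sw {0,1,2::nat} {0,1,2}"
  unfolding bij_betw_def inj_on_def sw_def by auto

lemma tI: "typeI [0,1,2,1,2]"
  unfolding typeI_def by (rule disjI1, rule exI[of _ 2]) (simp add: numeral_eq_Suc)
lemma tIII: "typeIII [0,2,1,0,2]"
  unfolding typeIII_def by (rule exI[of _ 1], rule exI[of _ 0]) simp


lemma tI': "typeI [0,Suc 0,2,Suc 0,2]" using tI by simp
lemma tIII': "typeIII [0,2,Suc 0,0,2]" using tIII by simp
lemma tIII'': "typeIII [0,2,Suc 0,0,2,Suc 0,2]"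
  unfolding typeIII_def by (rule exI[of _ 1], rule exI[of _ 1]) simp
lemma IVc0:
  assumes "x = [2,1,0,2,1,2]" "Suc k < length x" "x ! Suc k = hd x"
  shows "Q (map id (rev (take k (tl x)) @ hd x # drop (k+2) x)) \<or>
         Q (map sw (rev (take k (tl x)) @ hd x # drop (k+2) x))"
proof -
  have "k < 8" using assms(1,2) by auto
  then have "k = 0 \<or> k = 1 \<or> k = 2 \<or> k = 3 \<or> k = 4 \<or> k = 5 \<or> k = 6 \<or> k = 7" by arith
  then show ?thesis using assms(1,2,3)
    by (elim disjE; simp add: Q_def P2_def sw_def tI' tIII' tIII'' typeIV_def)
qed
lemma IVc1:
  assumes "x = [0,2,1,0,1,2]" "Suc k < length x" "x ! Suc k = hd x"
  shows "Q (map id (rev (take k (tl x)) @ hd x # drop (k+2) x)) \<or>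
         Q (map sw (rev (take k (tl x)) @ hd x # drop (k+2) x))"
proof -
  have "k < 8" using assms(1,2) by auto
  then have "k = 0 \<or> k = 1 \<or> k = 2 \<or> k = 3 \<or> k = 4 \<or> k = 5 \<or> k = 6 \<or> k = 7" by arith
  then show ?thesis using assms(1,2,3)
    by (elim disjE; simp add: Q_def P2_def sw_def tI' tIII' tIII'' typeIV_def)
qed
lemma IVc2:
  assumes "x = [0,1,2,0,2,1,2]" "Suc k < length x" "x ! Suc k = hd x"
  shows "Q (map id (rev (take k (tl x)) @ hd x # drop (k+2) x)) \<or>
         Q (map sw (rev (take k (tl x)) @ hd x # drop (k+2) x))"
proof -
  have "k < 8" using assms(1,2) by auto
  then have "k = 0 \<or> k = 1 \<or> k = 2 \<or> k = 3 \<or> k = 4 \<or> k = 5 \<or> k = 6 \<or> k = 7" by arith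
  then show ?thesis using assms(1,2,3)
    by (elim disjE; simp add: Q_def P2_def sw_def tI' tIII' tIII'' typeIV_def)
qed
lemma IVc3:
  assumes "x = [1,2,0,1,2,1,2]" "Suc k < length x" "x ! Suc k = hd x"
  shows "Q (map id (rev (take k (tl x)) @ hd x # drop (k+2) x)) \<or>
         Q (map sw (rev (take k (tl x)) @ hd x # drop (k+2) x))"
proof -
  have "k < 8" using assms(1,2) by auto
  then have "k = 0 \<or> k = 1 \<or> k = 2 \<or> k = 3 \<or> k = 4 \<or> k = 5 \<or> k = 6 \<or> k = 7" by arith
  then show ?thesis using assms(1,2,3)
    by (elim disjE; simp add: Q_def P2_def sw_def tI' tIII' tIII'' typeIV_def)
qed
lemma IVc4:
  assumes "x = [0,2,1,0,1,2,1,2]" "Suc k < length x" "x ! Suc k = hd x"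
  shows "Q (map id (rev (take k (tl x)) @ hd x # drop (k+2) x)) \<or>
         Q (map sw (rev (take k (tl x)) @ hd x # drop (k+2) x))"
proof -
  have "k < 8" using assms(1,2) by auto
  then have "k = 0 \<or> k = 1 \<or> k = 2 \<or> k = 3 \<or> k = 4 \<or> k = 5 \<or> k = 6 \<or> k = 7" by arith
  then show ?thesis using assms(1,2,3)
    by (elim disjE; simp add: Q_def P2_def sw_def tI' tIII' tIII'' typeIV_def)
qed
lemma IVc5:
  assumes "x = [2,0,2,1,0,2,1,2]" "Suc k < length x" "x ! Suc k = hd x"
  shows "Q (map id (rev (take k (tl x)) @ hd x # drop (k+2) x)) \<or>
         Q (map sw (rev (take k (tl x)) @ hd x # drop (k+2) x))"
proof -
  have "k < 8" using assms(1,2) by auto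
  then have "k = 0 \<or> k = 1 \<or> k = 2 \<or> k = 3 \<or> k = 4 \<or> k = 5 \<or> k = 6 \<or> k = 7" by arith
  then show ?thesis using assms(1,2,3)
    by (elim disjE; simp add: Q_def P2_def sw_def tI' tIII' tIII'' typeIV_def)
qed
lemma IVc6:
  assumes "x = [0,2,0,2,1,0,2,1,2]" "Suc k < length x" "x ! Suc k = hd x"
  shows "Q (map id (rev (take k (tl x)) @ hd x # drop (k+2) x)) \<or>
         Q (map sw (rev (take k (tl x)) @ hd x # drop (k+2) x))"
proof -
  have "k < 8" using assms(1,2) by auto
  then have "k = 0 \<or> k = 1 \<or> k = 2 \<or> k = 3 \<or> k = 4 \<or> k = 5 \<or> k = 6 \<or> k = 7" by arith
  then show ?thesis using assms(1,2,3)
    by (elim disjE; simp add: Q_def P2_def sw_def tI' tIII' tIII'' typeIV_def)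
qed
lemma IVc7:
  assumes "x = [1,2,0,1,2,0,2,1,2]" "Suc k < length x" "x ! Suc k = hd x"
  shows "Q (map id (rev (take k (tl x)) @ hd x # drop (k+2) x)) \<or>
         Q (map sw (rev (take k (tl x)) @ hd x # drop (k+2) x))"
proof -
  have "k < 8" using assms(1,2) by auto
  then have "k = 0 \<or> k = 1 \<or> k = 2 \<or> k = 3 \<or> k = 4 \<or> k = 5 \<or> k = 6 \<or> k = 7" by arith
  then show ?thesis using assms(1,2,3)
    by (elim disjE; simp add: Q_def P2_def sw_def tI' tIII' tIII'' typeIV_def)
qed
lemma IV_closed':
  assumes "typeIV x" "Suc k < length x" "x ! Suc k = hd x"
  shows "Q (map id (rev (take k (tl x)) @ hd x # drop (k+2) x)) \<or>
         Q (map sw (rev (take k (tl x)) @ hd x # drop (k+2) x))"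
proof -
  have "x = [2,1,0,2,1,2] \<or> x = [0,2,1,0,1,2] \<or> x = [0,1,2,0,2,1,2] \<or> x = [1,2,0,1,2,1,2] \<or>
     x = [0,2,1,0,1,2,1,2] \<or> x = [2,0,2,1,0,2,1,2] \<or> x = [0,2,0,2,1,0,2,1,2] \<or>
     x = [1,2,0,1,2,0,2,1,2]" using assms(1) unfolding typeIV_def by (simp only: insert_iff empty_iff simp_thms)
  then show ?thesis
  proof (elim disjE)
    assume "x = [2,1,0,2,1,2]" then show ?thesis using IVc0 assms(2,3) by blast
  next
    assume "x = [0,2,1,0,1,2]" then show ?thesis using IVc1 assms(2,3) by blast
  next
    assume "x = [0,1,2,0,2,1,2]" then show ?thesis using IVc2 assms(2,3) by blast
  next
    assume "x = [1,2,0,1,2,1,2]" then show ?thesis using IVc3 assms(2,3) by blast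
  next
    assume "x = [0,2,1,0,1,2,1,2]" then show ?thesis using IVc4 assms(2,3) by blast
  next
    assume "x = [2,0,2,1,0,2,1,2]" then show ?thesis using IVc5 assms(2,3) by blast
  next
    assume "x = [0,2,0,2,1,0,2,1,2]" then show ?thesis using IVc6 assms(2,3) by blast
  next
    assume "x = [1,2,0,1,2,0,2,1,2]" then show ?thesis using IVc7 assms(2,3) by blast
  qed
qed


lemma Q_closed:
  assumes "distinct_adj x" "set x = {0,1,2}" "Q x" "x = a # u @ a # v"
  shows "\<exists>\<tau>. bij_betw \<tau> {0,1,2} {0,1,2} \<and> Q (map \<tau> (rev u @ a # v))"
proof -
  from assms(3) consider "P2 x" | "typeI x" | "typeIII x" | "typeIV x" unfolding Q_def by blast
  then show ?thesis
  proof cases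
    case 1
    then have "Q (map id (rev u @ a # v))" using P2_flip assms(4) Q_def by simp
    then show ?thesis using bij_id3 by blast
  next
    case 2
    then show ?thesis
    proof (unfold typeI_def, elim disjE exE conjE)
      fix m assume "x = 0 # concat (replicate m [1,2])"
      then have "a = 0" "u @ 0 # v = concat (replicate m [1,2])" using assms(4) by auto
      then have "0 \<in> set (concat (replicate m [1::nat,2]))" by (metis in_set_conv_decomp)
      then show ?thesis using set_cr[of m "1::nat" 2] by auto
    next
      fix m assume "x = [0,2] @ concat (replicate m [1,2])"
      then have "a = 0" "u @ 0 # v = 2 # concat (replicate m [1,2])" using assms(4) by auto
      then have "0 \<in> set (2 # concat (replicate m [1::nat,2]))" by (metis in_set_conv_decomp)
      then show ?thesis using set_cr[of m "1::nat" 2] by auto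
    qed
  next
    case 3
    then obtain m p where m: "m \<ge> 1" and x: "x = [0] @ concat (replicate m [2,1]) @ [0,2] @ concat (replicate p [1,2])"
      unfolding typeIII_def by blast
    have a0: "a = 0" using x assms(4) by simp
    have e: "u @ 0 # v = concat (replicate m [2,1]) @ 0 # (2 # concat (replicate p [1,2]))"
      using x assms(4) a0 by simp
    have n1: "(0::nat) \<notin> set (concat (replicate m [2,1]))" using set_cr[of m "2::nat" 1] by auto
    have n2: "(0::nat) \<notin> set (2 # concat (replicate p [1,2]))" using set_cr[of p "1::nat" 2] by auto
    from unique_split[OF n1 n2 e] have uv: "u = concat (replicate m [2,1])" "v = 2 # concat (replicate p [1,2])" by auto
    have "rev u @ a # v = concat (map (\<lambda>a. [a,2]) (replicate m 1 @ 0 # replicate p 1))"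
      using uv a0 by (simp add: rev_cr map_replicate)
    moreover have "P2 (concat (map (\<lambda>a. [a,2]) (replicate m 1 @ 0 # replicate p (1::nat))))"
      by (rule P2_alt) simp
    ultimately have "Q (map id (rev u @ a # v))" using Q_def by simp
    then show ?thesis using bij_id3 by blast
  next
    case 4
    define k where "k = length u"
    have h: "a = hd x" "u = take k (tl x)" "v = drop (k+2) x" "x ! Suc k = hd x" "Suc k < length x"
      using assms(4) k_def by (auto simp: nth_append)
    from IV_closed'[OF 4 h(5,4)] h(1-3)
    have "Q (map id (rev u @ a # v)) \<or> Q (map sw (rev u @ a # v))" by simp
    then show ?thesis using bij_id3 bij_sw by blast
  qed
qed
lemma B_closed:
  assumes "B s" "1 \<le> i" "i \<le> length s" "length (flip i s) < length s"
  shows "B (flip i s)"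
proof -
  obtain \<sigma> where bs: "bij_betw \<sigma> {0,1,2} {0,1,2}" and q: "Q (map \<sigma> s)"
    and da: "distinct_adj s" and ss: "set s = {0,1,2}" using assms(1) B_def by blast
  have inj: "inj_on \<sigma> (set s)" using bs ss bij_betw_imp_inj_on by metis
  define x where "x = map \<sigma> s"
  have fx: "map \<sigma> (flip i s) = flip i x" using flip_map[OF inj] x_def by simp
  have dx: "distinct_adj x" using x_def da inj distinct_adj_mapI by blast
  have sx: "set x = {0,1,2}" using x_def ss bs bij_betw_imp_surj_on by (metis list.set_map)
  have "length (flip i x) < length x" using fx assms(4) x_def by (metis length_map)
  then obtain a u v where xa: "x = a # u @ a # v" and fl: "flip i x = rev u @ a # v"
    using flip_dec[OF dx assms(2)] assms(3) x_def by auto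
  obtain \<tau> where bt: "bij_betw \<tau> {0,1,2} {0,1,2}" and qt: "Q (map \<tau> (rev u @ a # v))"
    using Q_closed[OF dx sx _ xa] q x_def by blast
  have "map (\<tau> \<circ> \<sigma>) (flip i s) = map \<tau> (rev u @ a # v)"
    using fx fl by (metis map_map)
  moreover have "bij_betw (\<tau> \<circ> \<sigma>) {0,1,2} {0,1,2}" using bs bt bij_betw_trans by blast
  ultimately show ?thesis using flip_props[OF da assms(2,3)] ss qt unfolding B_def by metis
qed

lemma B_len: "B s \<Longrightarrow> length s \<noteq> 3"
proof -
  assume "B s"
  then obtain \<sigma> where bs: "bij_betw \<sigma> {0,1,2} {0,1,2}" and q: "Q (map \<sigma> s)"
    and da: "distinct_adj s" and ss: "set s = {0,1,2}" using B_def by blast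
  have inj: "inj_on \<sigma> (set s)" using bs ss bij_betw_imp_inj_on by metis
  have "length (map \<sigma> s) \<noteq> 3"
    apply (rule Q_len[OF _ _ q])
    using da inj distinct_adj_mapI apply blast
    using ss bs bij_betw_imp_surj_on by (metis list.set_map)
  then show ?thesis by simp
qed

lemma LB:
  assumes "B s"
  shows "(flip_step ^^ m) s t \<Longrightarrow> distinct_adj t \<and> length s \<le> length t + m \<and> (length s = length t + m \<longrightarrow> B t)"
proof (induction m arbitrary: t)
  case 0
  then show ?case using assms B_def by auto
next
  case (Suc m)
  from Suc.prems obtain t' where r: "(flip_step ^^ m) s t'" and st: "flip_step t' t"
    by (rule relpowp_Suc_E)
  from st obtain i where i: "1 \<le> i" "i \<le> length t'" "t = flip i t'" unfolding flip_step_def by blast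
  have ih: "distinct_adj t'" "length s \<le> length t' + m" "length s = length t' + m \<longrightarrow> B t'"
    using Suc.IH[OF r] by auto
  note fp = flip_props[OF ih(1) i(1,2)]
  show ?case
  proof (intro conjI impI)
    show "distinct_adj t" using fp i by simp
    show "length s \<le> length t + Suc m" using fp i ih by simp
    assume e: "length s = length t + Suc m"
    then have "length t < length t'" "length s = length t' + m" using fp i ih by auto
    then show "B t" using B_closed[of t' i] ih i by simp
  qed
qed



lemma fstep: "1 \<le> i \<Longrightarrow> i \<le> length x \<Longrightarrow> flip_step x (flip i x)"
  unfolding flip_step_def by blast

lemma H: "distinct_adj (c # w) \<Longrightarrow> set w \<subseteq> {b,c} \<Longrightarrow> a \<noteq> b \<Longrightarrow> a \<noteq> c \<Longrightarrow> b \<noteq> c \<Longrightarrow>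
  \<exists>m \<le> length w. \<exists>t. (flip_step ^^ m) (b # a # c # w) t \<and> length t = 3"
proof (induction w rule: induct_list012)
  case 1 then show ?case by (intro exI[of _ 0]) auto
next
  case (2 x)
  then have "x = b" by auto
  then have "flip 3 [b,a,c,x] = [c,a,b]" using 2 by (simp add: flip_def normalize_def numeral_eq_Suc)
  moreover have "flip_step [b,a,c,x] (flip 3 [b,a,c,x])" by (rule fstep) auto
  ultimately show ?case by (intro exI[of _ 1]) auto
next
  case (3 x y zs)
  then have xy: "x = b" "y = c" by (auto simp: distinct_adj_Cons)
  have dz: "distinct_adj (c # zs)" using 3(3) xy by (simp add: distinct_adj_Cons)
  then have rz: "remdups_adj (c # zs) = c # zs" by (simp add: distinct_adj_altdef)
  have f1: "flip 3 (b # a # c # x # y # zs) = c # a # b # c # zs"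
    using 3 xy rz by (simp add: flip_def normalize_def numeral_eq_Suc)
  have f2: "flip 3 (c # a # b # c # zs) = b # a # c # zs"
    using 3 xy rz by (simp add: flip_def normalize_def numeral_eq_Suc)
  have s1: "flip_step (b # a # c # x # y # zs) (c # a # b # c # zs)"
    using fstep[of 3 "b # a # c # x # y # zs"] f1 by simp
  have s2: "flip_step (c # a # b # c # zs) (b # a # c # zs)"
    using fstep[of 3 "c # a # b # c # zs"] f2 by simp
  obtain m t where m: "m \<le> length zs" "(flip_step ^^ m) (b # a # c # zs) t" "length t = 3"
    using 3(1)[OF dz] 3(4-7) by auto
  have "(flip_step ^^ Suc (Suc m)) (b # a # c # x # y # zs) t"
    using relpowp_Suc_I2[of flip_step, OF s1 relpowp_Suc_I2[of flip_step, OF s2 m(2)]] .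
  then show ?case using m by (intro exI[of _ "Suc (Suc m)"]) auto
qed

lemma UB: "distinct_adj s \<Longrightarrow> card (set s) = 3 \<Longrightarrow>
  \<exists>m \<le> length s - 2. \<exists>t. (flip_step ^^ m) s t \<and> length t = 3"
proof (induction "length s" arbitrary: s rule: less_induct)
  case less
  have n3: "length s \<ge> 3" using less.prems(2) card_length by metis
  show ?case
  proof (cases "length s = 3")
    case True then show ?thesis by (intro exI[of _ 0]) auto
  next
    case False
    then have n4: "length s \<ge> 4" using n3 by simp
    show ?thesis
    proof (cases "\<exists>i. 2 \<le> i \<and> i < length s \<and> s ! i = s ! 0")
      case True
      then obtain i where i: "2 \<le> i" "i < length s" "s ! i = s ! 0" by blast
      have d1: "distinct_adj (rev (take i s))" "distinct_adj (drop i s)"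
        using less.prems(1) by (metis append_take_drop_id distinct_adj_appendD1 distinct_adj_appendD2 distinct_adj_rev)+
      have c: "rev (take i s) \<noteq> [] \<and> drop i s \<noteq> [] \<and> last (rev (take i s)) = hd (drop i s)"
      proof -
        have ne: "s \<noteq> []" "take i s \<noteq> []" using i by auto
        then have "last (rev (take i s)) = s ! 0" by (simp add: last_rev hd_conv_nth)
        then show ?thesis using i ne by (simp add: hd_drop_conv_nth)
      qed
      have lf: "length (flip i s) = length s - 1"
        unfolding flip_def normalize_def rda_append[OF d1] using c i by simp
      note fp = flip_props[OF less.prems(1), of i]
      have "\<exists>m \<le> length (flip i s) - 2. \<exists>t. (flip_step ^^ m) (flip i s) t \<and> length t = 3"
        apply (rule less.hyps)
        using lf n4 fp i less.prems by auto
      then obtain m t where m: "m \<le> length (flip i s) - 2" "(flip_step ^^ m) (flip i s) t" "length t = 3"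
        by blast
      have "(flip_step ^^ Suc m) s t" by (rule relpowp_Suc_I2[OF fstep m(2)]) (use i in auto)
      then show ?thesis using m lf n4 by (intro exI[of _ "Suc m"]) auto
    next
      case False
      then have nf: "\<And>i. 2 \<le> i \<Longrightarrow> i < length s \<Longrightarrow> s ! i \<noteq> s ! 0" by blast
      obtain a w where s: "s = a # w" using n3 by (cases s) auto
      have "a \<notin> set w"
      proof
        assume "a \<in> set w"
        then obtain j where j: "j < length w" "w ! j = a" by (metis in_set_conv_nth)
        show False
        proof (cases j)
          case 0 then show False using j less.prems(1) s by (cases w) (auto simp: distinct_adj_Cons)
        next
          case (Suc j') then show False using nf[of "Suc j"] j s by auto
        qed
      qed
      have lw: "length w \<ge> 3" using n4 s by simp
      obtain b w1 where w1: "w = b # w1" using lw by (cases w) auto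
      obtain c w' where "w1 = c # w'" using lw w1 by (cases w1) auto
      with w1 have w: "w = b # c # w'" by simp
      have bc: "b \<noteq> c" using less.prems(1) s w by simp
      have ab: "a \<noteq> b" "a \<noteq> c" using \<open>a \<notin> set w\<close> w by auto
      have cw: "card (set w) = 2" using less.prems(2) s \<open>a \<notin> set w\<close> by simp
      have sw2: "set w = {b,c}"
      proof -
        have "{b,c} \<subseteq> set w" using w by auto
        moreover have "card {b,c} = 2" using bc by simp
        ultimately show ?thesis using cw by (metis card_subset_eq List.finite_set)
      qed
      have dcw: "distinct_adj (c # w')" using less.prems(1) s w by (simp add: distinct_adj_Cons)
      then have rz: "remdups_adj (c # w') = c # w'" by (simp add: distinct_adj_altdef)
      have f: "flip 2 s = b # a # c # w'" using s w ab bc rz by (simp add: flip_def normalize_def numeral_eq_Suc)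
      have st: "flip_step s (b # a # c # w')" using fstep[of 2 s] f n4 by simp
      obtain m t where m: "m \<le> length w'" "(flip_step ^^ m) (b # a # c # w') t" "length t = 3"
        using H[OF dcw _ ab bc] sw2 w by auto
      have "(flip_step ^^ Suc m) s t" by (rule relpowp_Suc_I2[OF st m(2)])
      then show ?thesis using m s w by (intro exI[of _ "Suc m"]) auto
    qed
  qed
qed

lemma pad: "distinct_adj s \<Longrightarrow> s \<noteq> [] \<Longrightarrow> (flip_step ^^ k) s s"
proof (induction k)
  case 0 then show ?case by simp
next
  case (Suc k)
  have "flip 1 s = s" using Suc.prems by (cases s) (auto simp: flip_def normalize_def distinct_adj_altdef)
  then have "flip_step s s" using fstep[of 1 s] Suc.prems by (cases s) auto
  then show ?case using Suc relpowp_Suc_I2[of flip_step] by blast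
qed



lemma bad_B: "bad s \<Longrightarrow> B s"
  unfolding bad_def B_def Q_def fully_kary_def normalized_iff
  using typeII_P2 by (auto simp: atLeast0_lessThan_Suc numeral_eq_Suc insert_commute)

theorem lemma3p4:
  fixes s :: "nat list" and n :: nat
  assumes "normalized s" and "fully_kary 3 s" and "length s = n" and "bad s"
  shows "grouping_dist s = n - 2"
proof -
  have Bs: "B s" using bad_B assms(4) .
  have da: "distinct_adj s" and ss: "set s = {0,1,2}" using Bs B_def by auto
  have c3: "card (set s) = 3" using ss by simp
  have ne: "s \<noteq> []" using ss by auto
  obtain m t where m: "m \<le> length s - 2" "(flip_step ^^ m) s t" "length t = 3"
    using UB[OF da c3] by blast
  have "(flip_step ^^ ((length s - 2 - m) + m)) s t"
    unfolding relpowp_add using pad[OF da ne] m(2) by blast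
  moreover have "length s - 2 - m + m = length s - 2" using m(1) by simp
  ultimately have ex: "\<exists>t. (flip_step ^^ (n - 2)) s t \<and> length t = card (set s)"
    using m assms(3) c3 by auto
  show ?thesis unfolding grouping_dist_def
  proof (rule Least_equality)
    show "\<exists>t. (flip_step ^^ (n - 2)) s t \<and> length t = card (set s)" by (rule ex)
  next
    fix y assume "\<exists>t. (flip_step ^^ y) s t \<and> length t = card (set s)"
    then obtain t' where r: "(flip_step ^^ y) s t'" and l: "length t' = 3" using c3 by auto
    from LB[OF Bs r] B_len l have "length s < length t' + y" by (cases "length s = length t' + y") auto
    then show "n - 2 \<le> y" using l assms(3) by simp
  qed
qed

end
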